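(* Let $P^1,\dots,P^m\in\Delta^n$ be in general position, and let $L_0=L(P^1,\dots,P^m)$. Let $\Psi'$ be the $(m-1)\times(n-1)$ matrix with entries $\Psi'_{i,j}=P^{i+1}_{j+1}-P^1_{j+1}$ ($i=1,\dots,m-1$, $j=1,\dots,n-1$), and let $\boldsymbol b=(H(P^1)-H(P^2),\dots,H(P^1)-H(P^m))\in\mathbb{R}^{m-1}$, where $H(P)=-\sum_j P_j\log P_j$. Let $\boldsymbol\theta=(\theta_2,\dots,\theta_n)$ be any solution of $\Psi'\,{}^t\boldsymbol\theta={}^t\boldsymbol b$, and define $Q\in\Delta^n$ by $Q_1=(1+\sum_{j=2}^n e^{\theta_j})^{-1}$ and $Q_j=Q_1e^{\theta_j}$ for $j=2,\dots,n$. Put $Q^0=\pi(Q|L_0)$. Then $Q^0$ is the unique point in $L_0$ satisfying $D(P^i\|Q^0)=D(P^1\|Q^0)$ for $i=2,\dots,m$.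
   Context: $\Delta^n=\{Q=(Q_1,\dots,Q_n):Q_j>0,\ \sum_jQ_j=1\}$. $D(Q\|Q')=\sum_jQ_j\log(Q_j/Q'_j)$. Points $P^1,\dots,P^m\in\Delta^n$ are in general position if $P^2-P^1,\dots,P^m-P^1$ are linearly independent. $L(P^1,\dots,P^m)=\{\sum_i\lambda_iP^i:\sum_i\lambda_i=1\}\cap\Delta^n$. For $Q'\in\Delta^n$ and such an affine subspace $L$, $\pi(Q'|L)$ denotes the unique $Q\in L$ minimizing $D(Q\|Q')$. *)

theory Defs
  imports "HOL-Analysis.Analysis"
begin

text \<open>Points of the open prob_simplex Delta^n are functions nat => real with coordinates
  0..n-1 (0-based: coordinate j here is coordinate j+1 of the paper), vanishing outside.\<close>
definition prob_simplex :: "nat \<Rightarrow> (nat \<Rightarrow> real) set" where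
  "prob_simplex n = {Q. (\<forall>j<n. Q j > 0) \<and> (\<forall>j\<ge>n. Q j = 0) \<and> (\<Sum>j<n. Q j) = 1}"

definition KL :: "nat \<Rightarrow> (nat \<Rightarrow> real) \<Rightarrow> (nat \<Rightarrow> real) \<Rightarrow> real" where
  "KL n Q Q' = (\<Sum>j<n. Q j * ln (Q j / Q' j))"

definition entropy :: "nat \<Rightarrow> (nat \<Rightarrow> real) \<Rightarrow> real" where
  "entropy n P = - (\<Sum>j<n. P j * ln (P j))"

text \<open>Points P 0, ..., P (m-1) (paper: P^1..P^m) in general position.\<close>
definition general_position :: "nat \<Rightarrow> nat \<Rightarrow> (nat \<Rightarrow> nat \<Rightarrow> real) \<Rightarrow> bool" where
  "general_position n m P \<longleftrightarrow>
     (\<forall>c::nat \<Rightarrow> real. (\<forall>j<n. (\<Sum>i\<in>{1..<m}. c i * (P i j - P 0 j)) = 0)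
        \<longrightarrow> (\<forall>i\<in>{1..<m}. c i = 0))"

definition affL :: "nat \<Rightarrow> nat \<Rightarrow> (nat \<Rightarrow> nat \<Rightarrow> real) \<Rightarrow> (nat \<Rightarrow> real) set" where
  "affL n m P = {Q \<in> prob_simplex n. \<exists>lam::nat \<Rightarrow> real. (\<Sum>i<m. lam i) = 1 \<and>
                     Q = (\<lambda>j. \<Sum>i<m. lam i * P i j)}"

definition iproj :: "nat \<Rightarrow> (nat \<Rightarrow> real) \<Rightarrow> (nat \<Rightarrow> real) set \<Rightarrow> (nat \<Rightarrow> real)" where
  "iproj n Q' L = (THE Q. Q \<in> L \<and> (\<forall>R\<in>L. KL n Q Q' \<le> KL n R Q'))"

definition expfam :: "nat \<Rightarrow> (nat \<Rightarrow> real) \<Rightarrow> (nat \<Rightarrow> real)" where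
  "expfam n \<theta> = (\<lambda>j. let Q0 = 1 / (1 + (\<Sum>k\<in>{1..<n}. exp (\<theta> k))) in
                     if j = 0 then Q0 else if j < n then Q0 * exp (\<theta> j) else 0)"

end

theory Submission
  imports Defs "HOL-Real_Asymp.Real_Asymp"
begin

lemma ln_strict: fixes u :: real assumes "0 < u" "u \<noteq> 1" shows "ln u < u - 1"
proof -
  have s: "0 < sqrt u" using assms by simp
  have "ln u = 2 * ln (sqrt u)" using assms by (simp add: ln_sqrt)
  also have "\<dots> \<le> 2 * (sqrt u - 1)" using ln_le_minus_one[OF s] by simp
  also have "\<dots> < u - 1"
  proof -
    have "sqrt u \<noteq> 1" using assms by auto
    hence "0 < (sqrt u - 1)^2" by simp
    also have "(sqrt u - 1)^2 = u - 2 * sqrt u + 1" using assms by (simp add: power2_eq_square algebra_simps)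
    finally show ?thesis by simp
  qed
  finally show ?thesis .
qed

lemma term_ge: fixes s r :: real assumes "0 < s" "0 < r" shows "s - r \<le> s * ln (s / r)"
proof -
  have "ln (r / s) \<le> r / s - 1" using assms by (intro ln_le_minus_one) simp
  hence "s * ln (r / s) \<le> s * (r / s - 1)" using assms by (intro mult_left_mono) auto
  moreover have "s * (r / s - 1) = r - s" using assms by (simp add: field_simps)
  moreover have "ln (s / r) = - ln (r / s)" using assms by (simp add: ln_div)
  ultimately show ?thesis by simp
qed

lemma term_eq: fixes s r :: real assumes "0 < s" "0 < r" "s * ln (s / r) = s - r" shows "s = r"
proof (rule ccontr)
  assume "s \<noteq> r"
  hence "r / s \<noteq> 1" using assms by auto
  hence "ln (r / s) < r / s - 1" using assms by (intro ln_strict) auto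
  hence "s * ln (r / s) < s * (r / s - 1)" using assms by (intro mult_strict_left_mono) auto
  moreover have "s * (r / s - 1) = r - s" using assms by (simp add: field_simps)
  moreover have "ln (s / r) = - ln (r / s)" using assms by (simp add: ln_div)
  ultimately show False using assms(3) by simp
qed

lemma gibbs_ge: assumes "S \<in> prob_simplex n" "R \<in> prob_simplex n" shows "0 \<le> KL n S R"
proof -
  have "(\<Sum>j<n. S j - R j) \<le> KL n S R" unfolding KL_def
    using assms by (intro sum_mono term_ge) (auto simp: prob_simplex_def)
  moreover have "(\<Sum>j<n. S j - R j) = 0" using assms by (simp add: sum_subtractf prob_simplex_def)
  ultimately show ?thesis by simp
qed

lemma gibbs_eq: assumes "S \<in> prob_simplex n" "R \<in> prob_simplex n" "KL n S R \<le> 0" shows "S = R"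
proof -
  have "(\<Sum>j<n. S j * ln (S j / R j) - (S j - R j)) = KL n S R - (\<Sum>j<n. S j - R j)"
    by (simp add: KL_def sum_subtractf)
  also have "(\<Sum>j<n. S j - R j) = 0" using assms by (simp add: sum_subtractf prob_simplex_def)
  finally have "(\<Sum>j<n. S j * ln (S j / R j) - (S j - R j)) \<le> 0" using assms by simp
  moreover have nn: "\<forall>j\<in>{..<n}. 0 \<le> S j * ln (S j / R j) - (S j - R j)"
    using assms term_ge by (auto simp: prob_simplex_def)
  moreover have "0 \<le> (\<Sum>j<n. S j * ln (S j / R j) - (S j - R j))" using nn by (intro sum_nonneg) auto
  ultimately have "(\<Sum>j<n. S j * ln (S j / R j) - (S j - R j)) = 0" by linarith
  hence "\<forall>j\<in>{..<n}. S j * ln (S j / R j) - (S j - R j) = 0"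
    using sum_nonneg_eq_0_iff[of "{..<n}" "\<lambda>j. S j * ln (S j / R j) - (S j - R j)"] nn by simp
  hence "\<forall>j<n. S j = R j" using assms term_eq by (auto simp: prob_simplex_def)
  moreover have "\<forall>j\<ge>n. S j = R j" using assms by (auto simp: prob_simplex_def)
  ultimately have "S j = R j" for j by (cases "j < n") auto
  thus ?thesis by (rule ext)
qed

lemma conv_h: fixes x y q t :: real assumes "0 < x" "0 < y" "0 < q" "0 \<le> t" "t \<le> 1"
  shows "((1-t)*x + t*y) * ln (((1-t)*x + t*y) / q) \<le> (1-t) * (x * ln (x/q)) + t * (y * ln (y / q))"
proof -
  define z where "z = (1-t)*x + t*y"
  have z: "0 < z" unfolding z_def using assms
    by (cases "t = 0") (auto intro: add_nonneg_pos add_pos_nonneg)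
  have "(1-t) * (x - z) \<le> (1-t) * (x * ln (x/z))" using assms z term_ge by (intro mult_left_mono) auto
  moreover have "t * (y - z) \<le> t * (y * ln (y/z))" using assms z term_ge by (intro mult_left_mono) auto
  moreover have "(1-t) * (x - z) + t * (y - z) = 0" unfolding z_def by (simp add: algebra_simps)
  moreover have "ln (x/q) = ln (x/z) + ln (z/q)" "ln (y/q) = ln (y/z) + ln (z/q)"
    using assms z by (simp_all add: ln_div)
  ultimately have "z * ln (z/q) \<le> (1-t) * (x * ln (x/q)) + t * (y * ln (y / q))"
    unfolding z_def by (simp add: algebra_simps) 
  thus ?thesis unfolding z_def .
qed

lemma xlnx_cont: "continuous_on {0..} (\<lambda>x::real. x * ln x)"
proof -
  have "continuous (at x within {0..}) (\<lambda>x::real. x * ln x)" if "x \<ge> 0" for x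
  proof (cases "x = 0")
    case True
    have "((\<lambda>x::real. x * ln x) \<longlongrightarrow> 0) (at_right 0)" by real_asymp
    hence "((\<lambda>x::real. x * ln x) \<longlongrightarrow> 0) (at 0 within {0..})"
      by (simp add: at_within_Ici_at_right)
    thus ?thesis using True by (simp add: continuous_within)
  next
    case False
    hence "isCont (\<lambda>x::real. x * ln x) x" using that by (intro continuous_intros) auto
    thus ?thesis by (simp add: continuous_at_imp_continuous_at_within)
  qed
  thus ?thesis by (simp add: continuous_on_eq_continuous_within)
qed

lemma h_cont: assumes "0 < q" shows "continuous_on {0..} (\<lambda>x::real. x * ln (x / q))"
proof -
  have "continuous_on {0..} (\<lambda>x::real. x * ln x - x * ln q)"
    by (intro continuous_intros xlnx_cont)
  moreover have "\<And>x. x \<in> {0..} \<Longrightarrow> x * ln x - x * ln q = x * ln (x / q)"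
    using assms by (auto simp: ln_div algebra_simps)
  ultimately show ?thesis by (rule continuous_on_eq)
qed


lemma coord_cont[continuous_intros]: "continuous_on S (\<lambda>x::nat\<Rightarrow>real. x i)"
  by (rule continuous_on_subset[OF continuous_on_product_coordinates]) simp

lemma compact_PiE_UNIV: assumes "\<And>i. compact (A i :: real set)" shows "compact (PiE UNIV A)"
  using compactin_PiE[of "\<lambda>i. euclidean" UNIV A] assms by (simp add: euclidean_product_topology)

definition sv :: "(nat \<Rightarrow> nat \<Rightarrow> real) \<Rightarrow> nat \<Rightarrow> (nat \<Rightarrow> real) \<Rightarrow> nat \<Rightarrow> real" where
  "sv P m \<mu> j = P 0 j + (\<Sum>i\<in>{1..<m}. \<mu> i * (P i j - P 0 j))"

lemma sv_sum: assumes "m \<ge> 1" "\<forall>i<m. P i \<in> prob_simplex n" shows "(\<Sum>j<n. sv P m \<mu> j) = 1"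
proof -
  have s: "(\<Sum>j<n. P i j) = 1" if "i < m" for i using assms that by (auto simp: prob_simplex_def)
  have "(\<Sum>j<n. \<Sum>i\<in>{1..<m}. \<mu> i * (P i j - P 0 j)) = (\<Sum>i\<in>{1..<m}. \<Sum>j<n. \<mu> i * (P i j - P 0 j))"
    by (rule sum.swap)
  also have "\<dots> = (\<Sum>i\<in>{1..<m}. \<mu> i * ((\<Sum>j<n. P i j) - (\<Sum>j<n. P 0 j)))"
    by (simp add: right_diff_distrib sum_subtractf sum_distrib_left)
  also have "\<dots> = 0" using s assms by simp
  finally have z: "(\<Sum>j<n. \<Sum>i\<in>{1..<m}. \<mu> i * (P i j - P 0 j)) = 0" .
  have "(\<Sum>j<n. sv P m \<mu> j) = (\<Sum>j<n. P 0 j) + (\<Sum>j<n. \<Sum>i\<in>{1..<m}. \<mu> i * (P i j - P 0 j))"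
    unfolding sv_def by (rule sum.distrib)
  thus ?thesis using z s assms by simp
qed

lemma sv_out: assumes "\<forall>i<m. P i \<in> prob_simplex n" "j \<ge> n" "m \<ge> 1" shows "sv P m \<mu> j = 0"
  using assms unfolding sv_def prob_simplex_def by auto

lemma lowbound:
  assumes gp: "general_position n m P"
  shows "\<exists>c>0. \<forall>\<mu>. c * (\<Sum>i\<in>{1..<m}. \<mu> i ^ 2) \<le> (\<Sum>j<n. (\<Sum>i\<in>{1..<m}. \<mu> i * (P i j - P 0 j))^2)"
proof (cases "m \<le> 1")
  case True thus ?thesis by (intro exI[of _ 1]) (auto intro: sum_nonneg)
next
  case False
  define g where "g = (\<lambda>\<mu>::nat\<Rightarrow>real. (\<Sum>j<n. (\<Sum>i\<in>{1..<m}. \<mu> i * (P i j - P 0 j))^2))"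
  define Sp where "Sp = PiE UNIV (\<lambda>i. if i \<in> {1..<m} then {-1..1} else {0::real}) \<inter> {\<mu>. (\<Sum>i\<in>{1..<m}. \<mu> i ^ 2) = 1}"
  have "compact Sp" unfolding Sp_def
    by (intro compact_Int_closed compact_PiE_UNIV closed_Collect_eq continuous_intros) auto
  moreover have "(\<lambda>i. if i = 1 then 1 else 0::real) \<in> Sp" using False
    by (auto simp: Sp_def if_distrib[of "\<lambda>x. x^2"] cong: if_cong)
  hence "Sp \<noteq> {}" by auto
  moreover have "continuous_on Sp g" unfolding g_def by (intro continuous_intros)
  ultimately obtain \<mu>0 where m0: "\<mu>0 \<in> Sp" "\<And>\<mu>. \<mu> \<in> Sp \<Longrightarrow> g \<mu>0 \<le> g \<mu>"
    using continuous_attains_inf by metis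
  have gpos: "g \<mu>0 > 0"
  proof (rule ccontr)
    assume "\<not> g \<mu>0 > 0"
    moreover have "g \<mu>0 \<ge> 0" unfolding g_def by (intro sum_nonneg) auto
    ultimately have "g \<mu>0 = 0" by simp
    hence "\<forall>j\<in>{..<n}. (\<Sum>i\<in>{1..<m}. \<mu>0 i * (P i j - P 0 j))^2 = 0"
      unfolding g_def by (subst sum_nonneg_eq_0_iff[symmetric]) auto
    hence "\<forall>j<n. (\<Sum>i\<in>{1..<m}. \<mu>0 i * (P i j - P 0 j)) = 0" by simp
    hence "\<forall>i\<in>{1..<m}. \<mu>0 i = 0" using gp unfolding general_position_def by blast
    hence "(\<Sum>i\<in>{1..<m}. \<mu>0 i ^ 2) = 0" by simp
    thus False using m0(1) by (simp add: Sp_def)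
  qed
  have main: "g \<mu>0 * (\<Sum>i\<in>{1..<m}. \<mu> i ^ 2) \<le> g \<mu>" for \<mu> :: "nat \<Rightarrow> real"
  proof -
    define r where "r = (\<Sum>i\<in>{1..<m}. \<mu> i ^ 2)"
    have r0: "r \<ge> 0" unfolding r_def by (intro sum_nonneg) auto
    have gg: "g \<mu> = (\<Sum>j<n. (\<Sum>i\<in>{1..<m}. \<mu> i * (P i j - P 0 j))^2)" unfolding g_def ..
    show "g \<mu>0 * (\<Sum>i\<in>{1..<m}. \<mu> i ^ 2) \<le> g \<mu>"
    proof (cases "r = 0")
      case True thus ?thesis unfolding r_def g_def by (auto intro: sum_nonneg)
    next
      case False
      hence rp: "r > 0" using r0 by simp
      define \<mu>' where "\<mu>' = (\<lambda>i. if i \<in> {1..<m} then \<mu> i / sqrt r else 0)"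
      have "\<mu>' \<in> Sp"
      proof -
        have "-1 \<le> \<mu> i / sqrt r \<and> \<mu> i / sqrt r \<le> 1" if "i \<in> {1..<m}" for i
        proof -
          have "\<mu> i ^ 2 \<le> r" unfolding r_def using that by (intro member_le_sum) auto
          hence "sqrt (\<mu> i ^ 2) \<le> sqrt r" by (rule real_sqrt_le_mono)
          hence "\<bar>\<mu> i / sqrt r\<bar> \<le> 1" using rp by (simp add: abs_div)
          thus ?thesis unfolding abs_le_iff by linarith
        qed
        moreover have "(\<Sum>i\<in>{1..<m}. \<mu>' i ^ 2) = 1"
        proof -
          have "(\<Sum>i\<in>{1..<m}. \<mu>' i ^ 2) = (\<Sum>i\<in>{1..<m}. \<mu> i ^ 2 / r)"
            unfolding \<mu>'_def using rp by (intro sum.cong) (auto simp: power_divide)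
          also have "\<dots> = 1" using rp by (simp add: sum_divide_distrib[symmetric] r_def)
          finally show ?thesis .
        qed
        ultimately show ?thesis unfolding Sp_def \<mu>'_def by auto
      qed
      hence "g \<mu>0 \<le> g \<mu>'" by (rule m0(2))
      also have "g \<mu>' = g \<mu> / r"
      proof -
        have e: "(\<Sum>i\<in>{1..<m}. \<mu>' i * (P i j - P 0 j)) = (\<Sum>i\<in>{1..<m}. \<mu> i * (P i j - P 0 j)) / sqrt r" for j
          unfolding \<mu>'_def by (simp add: sum_divide_distrib)
        have e2: "(\<Sum>i\<in>{1..<m}. \<mu>' i * (P i j - P 0 j))^2 = (\<Sum>i\<in>{1..<m}. \<mu> i * (P i j - P 0 j))^2 / r" for j
          unfolding e power_divide using rp by simp
        show ?thesis unfolding g_def e2 by (simp add: sum_divide_distrib)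
      qed
      finally have "g \<mu>0 \<le> g \<mu> / r" .
      hence "g \<mu>0 * r \<le> g \<mu>" using rp by (simp add: field_simps)
      thus "g \<mu>0 * (\<Sum>i\<in>{1..<m}. \<mu> i ^ 2) \<le> g \<mu>" unfolding r_def .
    qed
  qed
  show ?thesis
    apply (rule exI[of _ "g \<mu>0"])
    using gpos main by (simp add: g_def)
qed

lemma feas_bound:
  assumes "m \<ge> 1" "\<forall>i<m. P i \<in> prob_simplex n" "general_position n m P"
  shows "\<exists>B0>0. \<forall>\<mu>. (\<forall>j<n. 0 \<le> sv P m \<mu> j) \<longrightarrow> (\<forall>i\<in>{1..<m}. \<bar>\<mu> i\<bar> \<le> B0)"
proof -
  obtain c where c: "c > 0" "\<And>\<mu>. c * (\<Sum>i\<in>{1..<m}. \<mu> i ^ 2) \<le> (\<Sum>j<n. (\<Sum>i\<in>{1..<m}. \<mu> i * (P i j - P 0 j))^2)"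
    using lowbound[OF assms(3)] by blast
  have P0: "P 0 \<in> prob_simplex n" using assms by auto
  show ?thesis
  proof (intro exI[of _ "1 + real n / c"] conjI allI impI ballI)
    show "0 < 1 + real n / c" using c by (simp add: add_pos_nonneg)
    fix \<mu> i assume feas: "\<forall>j<n. 0 \<le> sv P m \<mu> j" and i: "i \<in> {1..<m}"
    have "(\<Sum>j<n. (\<Sum>i\<in>{1..<m}. \<mu> i * (P i j - P 0 j))^2) \<le> (\<Sum>j<n. 1)"
    proof (intro sum_mono)
      fix j assume j: "j \<in> {..<n}"
      have "sv P m \<mu> j \<le> (\<Sum>j<n. sv P m \<mu> j)" using feas j by (intro member_le_sum) auto
      hence "sv P m \<mu> j \<le> 1" using sv_sum[OF assms(1,2), of \<mu>] by simp
      moreover have "P 0 j \<le> (\<Sum>j<n. P 0 j)" using P0 j by (intro member_le_sum) (auto simp: prob_simplex_def less_imp_le)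
      hence "P 0 j \<le> 1" using P0 by (simp add: prob_simplex_def)
      moreover have "0 \<le> P 0 j" using P0 j unfolding prob_simplex_def by (simp add: less_imp_le)
      moreover have "0 \<le> sv P m \<mu> j" using feas j by simp
      ultimately have "\<bar>(\<Sum>i\<in>{1..<m}. \<mu> i * (P i j - P 0 j))\<bar> \<le> 1" unfolding sv_def by linarith
      from power_mono[OF this abs_ge_zero, of 2]
      show "(\<Sum>i\<in>{1..<m}. \<mu> i * (P i j - P 0 j))^2 \<le> 1" by simp
    qed
    hence "c * (\<Sum>i\<in>{1..<m}. \<mu> i ^ 2) \<le> real n" using c(2)[of \<mu>] by simp
    moreover have "\<mu> i ^ 2 \<le> (\<Sum>i\<in>{1..<m}. \<mu> i ^ 2)" using i by (intro member_le_sum) auto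
    moreover from this have "c * \<mu> i ^ 2 \<le> c * (\<Sum>i\<in>{1..<m}. \<mu> i ^ 2)" using c(1) by (intro mult_left_mono) auto
    ultimately have "c * \<mu> i ^ 2 \<le> real n" by linarith
    hence sq: "\<mu> i ^ 2 \<le> real n / c" using c(1) by (simp add: field_simps)
    show "\<bar>\<mu> i\<bar> \<le> 1 + real n / c"
    proof (cases "\<bar>\<mu> i\<bar> \<le> 1")
      case True
      have "0 \<le> real n / c" using c by simp
      thus ?thesis using True by linarith
    next
      case False
      hence "1 * \<bar>\<mu> i\<bar> \<le> \<bar>\<mu> i\<bar> * \<bar>\<mu> i\<bar>" by (intro mult_right_mono) auto
      thus ?thesis using sq by (simp add: power2_eq_square)
    qed
  qed
qed

lemma sv_scale: "sv P m (\<lambda>i. (1 - t) * \<mu> i) j = (1 - t) * sv P m \<mu> j + t * P 0 j"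
proof -
  define S where "S = (\<Sum>i\<in>{1..<m}. \<mu> i * (P i j - P 0 j))"
  have "sv P m (\<lambda>i. (1 - t) * \<mu> i) j = P 0 j + (1 - t) * S"
    unfolding sv_def S_def by (simp add: sum_distrib_left mult.assoc)
  moreover have "sv P m \<mu> j = P 0 j + S" unfolding sv_def S_def ..
  ultimately show ?thesis by (simp add: algebra_simps)
qed

lemma sv_upd: assumes "i \<in> {1..<m}"
  shows "sv P m (\<mu>(i := \<mu> i + t)) j = sv P m \<mu> j + t * (P i j - P 0 j)"
proof -
  have "(\<Sum>k\<in>{1..<m}. (\<mu>(i := \<mu> i + t)) k * (P k j - P 0 j))
      = (\<Sum>k\<in>{1..<m}. \<mu> k * (P k j - P 0 j) + (if k = i then t * (P k j - P 0 j) else 0))"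
    by (intro sum.cong) (auto simp: algebra_simps)
  also have "\<dots> = (\<Sum>k\<in>{1..<m}. \<mu> k * (P k j - P 0 j)) + t * (P i j - P 0 j)"
    using assms by (simp add: sum.distrib)
  finally show ?thesis unfolding sv_def by simp
qed

lemma exists_orth:
  assumes m1: "m \<ge> 1" and simp: "\<forall>i<m. P i \<in> prob_simplex n" and gp: "general_position n m P"
    and Qs: "Q \<in> prob_simplex n"
  shows "\<exists>R\<in>affL n m P. \<forall>i\<in>{1..<m}. (\<Sum>j<n. (P i j - P 0 j) * ln (R j / Q j)) = 0"
proof -
  obtain B0 where B0: "B0 > 0" "\<And>\<mu>. \<forall>j<n. 0 \<le> sv P m \<mu> j \<Longrightarrow> \<forall>i\<in>{1..<m}. \<bar>\<mu> i\<bar> \<le> B0"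
    using feas_bound[OF m1 simp gp] by blast
  define B where "B = B0 + 1"
  have P0: "P 0 \<in> prob_simplex n" using simp m1 by auto
  have Qp: "\<And>j. j < n \<Longrightarrow> Q j > 0" using Qs by (auto simp: prob_simplex_def)
  have P0p: "\<And>j. j < n \<Longrightarrow> P 0 j > 0" using P0 by (auto simp: prob_simplex_def)
  define Lam where "Lam = PiE UNIV (\<lambda>i. if i \<in> {1..<m} then {-B..B} else {0::real}) \<inter> {\<mu>. \<forall>j<n. 0 \<le> sv P m \<mu> j}"
  define F where "F = (\<lambda>\<mu>. \<Sum>j<n. sv P m \<mu> j * ln (sv P m \<mu> j / Q j))"
  have svc: "continuous_on S (\<lambda>\<mu>. sv P m \<mu> j)" for S j unfolding sv_def by (intro continuous_intros)
  have "{\<mu>. \<forall>j<n. 0 \<le> sv P m \<mu> j} = (\<Inter>j<n. {\<mu>. 0 \<le> sv P m \<mu> j})" by auto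
  hence "closed {\<mu>. \<forall>j<n. 0 \<le> sv P m \<mu> j}" by (auto intro!: closed_INT closed_Collect_le svc continuous_intros)
  hence cpt: "compact Lam" unfolding Lam_def by (intro compact_Int_closed compact_PiE_UNIV) auto
  have "(\<lambda>_. 0) \<in> Lam" unfolding Lam_def using B0 P0p by (auto simp: B_def sv_def less_imp_le)
  hence ne: "Lam \<noteq> {}" by auto
  have "continuous_on Lam F" unfolding F_def
  proof (intro continuous_on_sum)
    fix j assume "j \<in> {..<n}"
    hence "0 < Q j" using Qp by simp
    thus "continuous_on Lam (\<lambda>\<mu>. sv P m \<mu> j * ln (sv P m \<mu> j / Q j))"
      using \<open>j \<in> {..<n}\<close>
      by (intro continuous_on_compose2[OF h_cont svc, of "Q j"]) (auto simp: Lam_def)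
  qed
  then obtain \<mu>s where \<mu>s: "\<mu>s \<in> Lam" "\<And>\<mu>. \<mu> \<in> Lam \<Longrightarrow> F \<mu>s \<le> F \<mu>"
    using continuous_attains_inf[OF cpt ne] by metis
  define R where "R = sv P m \<mu>s"
  have Rnn: "\<And>j. j < n \<Longrightarrow> 0 \<le> R j" using \<mu>s(1) by (auto simp: Lam_def R_def)
  have \<mu>sB: "\<forall>i\<in>{1..<m}. \<bar>\<mu>s i\<bar> \<le> B0" using B0(2) \<mu>s(1) by (auto simp: Lam_def)
  have \<mu>sz: "\<mu>s i = 0" if "i \<notin> {1..<m}" for i
  proof -
    have "\<mu>s i \<in> (if i \<in> {1..<m} then {-B..B} else {0})" using \<mu>s(1) unfolding Lam_def PiE_iff by blast
    thus ?thesis using that by (auto split: if_splits)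
  qed
  have Rpos: "\<And>j. j < n \<Longrightarrow> 0 < R j"
  proof (rule ccontr)
    fix j0 assume j0: "j0 < n" "\<not> 0 < R j0"
    hence Rj0: "R j0 = 0" using Rnn[OF j0(1)] by simp
    define h where "h = (\<lambda>j x. x * ln (x / Q j))"
    define Z where "Z = {j\<in>{..<n}. R j = 0}"
    define a where "a = (\<Sum>j\<in>Z. P 0 j)"
    have "P 0 j0 \<le> a" unfolding a_def Z_def using j0 Rj0 P0p
      by (intro member_le_sum) (auto simp: less_imp_le)
    hence apos: "a > 0" using P0p[OF j0(1)] by simp
    define C where "C = (\<Sum>j<n. h j (P 0 j) - h j (R j))"
    define t where "t = min (1/2) (exp (-(\<bar>C\<bar>+1)/a))"
    have t0: "0 < t" "t \<le> 1/2" unfolding t_def by auto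
    have "ln t \<le> ln (exp (-(\<bar>C\<bar>+1)/a))" unfolding t_def by (subst ln_le_cancel_iff) auto
    hence lnt: "a * ln t \<le> -(\<bar>C\<bar>+1)" using apos by (simp add: field_simps)
    define \<mu>t where "\<mu>t = (\<lambda>i. (1 - t) * \<mu>s i)"
    have svt: "sv P m \<mu>t j = (1 - t) * R j + t * P 0 j" for j unfolding \<mu>t_def R_def by (rule sv_scale)
    have "\<mu>t \<in> Lam"
    proof -
      have "-B \<le> (1 - t) * \<mu>s i \<and> (1 - t) * \<mu>s i \<le> B" if "i \<in> {1..<m}" for i
      proof -
        have "\<bar>(1 - t) * \<mu>s i\<bar> = (1 - t) * \<bar>\<mu>s i\<bar>" using t0 by (simp add: abs_mult)
        also have "\<dots> \<le> 1 * \<bar>\<mu>s i\<bar>" using t0 by (intro mult_right_mono) auto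
        moreover have "\<bar>\<mu>s i\<bar> \<le> B0" using \<mu>sB that by blast
        ultimately have "\<bar>(1 - t) * \<mu>s i\<bar> \<le> B" by (simp add: B_def)
        thus ?thesis unfolding abs_le_iff by linarith
      qed
      moreover have "0 \<le> sv P m \<mu>t j" if "j < n" for j
        unfolding svt using t0 Rnn[OF that] P0p[OF that] by simp
      ultimately show ?thesis unfolding Lam_def \<mu>t_def using \<mu>sz by (auto simp: PiE_iff)
    qed
    have pt: "h j (sv P m \<mu>t j) \<le> h j (R j) + t * (h j (P 0 j) - h j (R j)) + (if R j = 0 then t * P 0 j * ln t else 0)"
      if j: "j < n" for j
    proof (cases "R j = 0")
      case True
      have "h j (sv P m \<mu>t j) = t * P 0 j * ln (t * P 0 j / Q j)" unfolding svt True h_def by simp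
      also have "ln (t * P 0 j / Q j) = ln t + ln (P 0 j / Q j)" using t0 P0p[OF j] Qp[OF j]
        by (simp add: ln_mult ln_div)
      finally show ?thesis using True unfolding h_def by (simp add: algebra_simps)
    next
      case False
      hence "0 < R j" using Rnn[OF j] by simp
      hence "h j (sv P m \<mu>t j) \<le> (1-t) * h j (R j) + t * h j (P 0 j)"
        unfolding svt h_def using conv_h[of "R j" "P 0 j" "Q j" t] t0 P0p[OF j] Qp[OF j] by simp
      thus ?thesis using False by (simp add: algebra_simps)
    qed
    have "F \<mu>t = (\<Sum>j<n. h j (sv P m \<mu>t j))" unfolding F_def h_def by simp
    also have "\<dots> \<le> (\<Sum>j<n. h j (R j) + t * (h j (P 0 j) - h j (R j)) + (if R j = 0 then t * P 0 j * ln t else 0))"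
      by (intro sum_mono pt) auto
    also have "\<dots> = F \<mu>s + t * C + t * ln t * a"
    proof -
      have "(\<Sum>j<n. (if R j = 0 then t * P 0 j * ln t else 0)) = (\<Sum>j\<in>Z. t * P 0 j * ln t)"
        unfolding Z_def by (rule sum.inter_filter[symmetric]) simp
      also have "\<dots> = t * ln t * a" unfolding a_def by (simp add: sum_distrib_left algebra_simps)
      finally show ?thesis unfolding F_def C_def h_def R_def
        by (simp add: sum.distrib sum_distrib_left)
    qed
    also have "\<dots> < F \<mu>s"
    proof -
      have "t * (C + a * ln t) < 0" using t0 lnt by (intro mult_pos_neg) auto
      thus ?thesis by (simp add: algebra_simps)
    qed
    finally have "F \<mu>t < F \<mu>s" .
    with \<mu>s(2)[OF \<open>\<mu>t \<in> Lam\<close>] show False by simp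
  qed
  have orth: "(\<Sum>j<n. (P i j - P 0 j) * ln (R j / Q j)) = 0" if i: "i \<in> {1..<m}" for i
  proof -
    define w where "w = (\<lambda>j. P i j - P 0 j)"
    define \<phi> where "\<phi> = (\<lambda>t. \<Sum>j<n. (R j + t * w j) * ln ((R j + t * w j) / Q j))"
    have \<phi>F: "\<phi> t = F (\<mu>s(i := \<mu>s i + t))" for t
      unfolding \<phi>_def F_def sv_upd[OF i] R_def w_def ..
    have ev: "eventually (\<lambda>t. \<forall>j\<in>{..<n}. 0 < R j + t * w j) (nhds 0)"
    proof (rule eventually_ball_finite, simp, intro ballI)
      fix j assume "j \<in> {..<n}"
      hence "0 < R j" using Rpos by simp
      moreover have "((\<lambda>t. R j + t * w j) \<longlongrightarrow> R j + 0 * w j) (nhds 0)"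
        by (rule tendsto_add[OF tendsto_const tendsto_mult[OF filterlim_ident tendsto_const]])
      hence "((\<lambda>t. R j + t * w j) \<longlongrightarrow> R j) (nhds 0)" by simp
      ultimately show "eventually (\<lambda>t. 0 < R j + t * w j) (nhds 0)"
        using order_tendstoD(1) by blast
    qed
    then obtain d where d: "d > 0" "\<And>t. dist t 0 < d \<Longrightarrow> \<forall>j\<in>{..<n}. 0 < R j + t * w j"
      unfolding eventually_nhds_metric by blast
    define d' where "d' = min d 1"
    have loc: "\<forall>y. \<bar>0 - y\<bar> < d' \<longrightarrow> \<phi> 0 \<le> \<phi> y"
    proof (intro allI impI)
      fix y :: real assume y: "\<bar>0 - y\<bar> < d'"
      have "\<mu>s(i := \<mu>s i + y) \<in> Lam"
      proof -
        have "\<bar>\<mu>s i\<bar> \<le> B0" using \<mu>sB i by blast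
        moreover have "\<bar>y\<bar> < 1" using y by (simp add: d'_def)
        ultimately have "\<bar>\<mu>s i + y\<bar> \<le> B" unfolding B_def using abs_triangle_ineq[of "\<mu>s i" y] by linarith

        moreover have "\<forall>j<n. 0 \<le> sv P m (\<mu>s(i := \<mu>s i + y)) j"
        proof -
          have h: "\<forall>j<n. 0 \<le> R j + y * w j" using d(2)[of y] y by (auto simp: d'_def dist_real_def less_imp_le)
          show ?thesis using h unfolding sv_upd[OF i] by (simp add: R_def w_def)
        qed
        moreover have "(\<mu>s(i := \<mu>s i + y)) k \<in> (if k \<in> {1..<m} then {-B..B} else {0})" for k
        proof (cases "k = i")
          case True thus ?thesis using i \<open>\<bar>\<mu>s i + y\<bar> \<le> B\<close> by (simp add: abs_le_iff)
        next
          case False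
          show ?thesis
          proof (cases "k \<in> {1..<m}")
            case True
            hence "\<bar>\<mu>s k\<bar> \<le> B0" using \<mu>sB by blast
            hence "\<bar>\<mu>s k\<bar> \<le> B" by (simp add: B_def)
            thus ?thesis using True False by (simp add: abs_le_iff)
          next
            case F2: False
            thus ?thesis using False \<mu>sz[OF F2] by auto
          qed
        qed
        ultimately show ?thesis unfolding Lam_def by (auto simp: PiE_iff)
      qed
      hence "F \<mu>s \<le> \<phi> y" unfolding \<phi>F by (rule \<mu>s(2))
      moreover have "\<phi> 0 = F \<mu>s" unfolding \<phi>_def F_def R_def by simp
      ultimately show "\<phi> 0 \<le> \<phi> y" by simp
    qed
    have der: "(\<phi> has_real_derivative (\<Sum>j<n. w j * ln (R j / Q j) + w j)) (at 0)"
      unfolding \<phi>_def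
    proof (intro DERIV_sum)
      fix j assume j: "j \<in> {..<n}"
      hence pos: "0 < R j" "0 < Q j" using Rpos Qp by auto
      have d1: "((\<lambda>t. R j + t * w j) has_real_derivative w j) (at 0)"
        using DERIV_add[OF DERIV_const DERIV_cmult_right[OF DERIV_ident, of "w j"]] by simp
      have d2: "((\<lambda>t. (R j + t * w j) / Q j) has_real_derivative w j / Q j) (at 0)"
        by (rule DERIV_cdivide[OF d1])
      have "DERIV ln ((R j + 0 * w j) / Q j) :> inverse ((R j + 0 * w j) / Q j)"
        using pos by (intro DERIV_ln) simp
      from DERIV_chain2[OF this d2]
      have d3: "((\<lambda>t. ln ((R j + t * w j) / Q j)) has_real_derivative inverse ((R j + 0 * w j) / Q j) * (w j / Q j)) (at 0)" .
      from DERIV_mult[OF d1 d3]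
      show "((\<lambda>t. (R j + t * w j) * ln ((R j + t * w j) / Q j)) has_real_derivative
              w j * ln (R j / Q j) + w j) (at 0)"
        by (rule DERIV_cong) (use pos in simp)
    qed
    have "(\<Sum>j<n. w j * ln (R j / Q j) + w j) = 0"
      using DERIV_local_min[OF der _ loc] d by (simp add: d'_def)
    moreover have "(\<Sum>j<n. w j) = 0"
      using simp P0 i by (simp add: w_def sum_subtractf prob_simplex_def)
    ultimately show ?thesis by (simp add: sum.distrib w_def)
  qed
  have "R \<in> affL n m P"
  proof -
    have "R \<in> prob_simplex n" unfolding prob_simplex_def
      using Rpos sv_out[OF simp _ m1] sv_sum[OF m1 simp] by (auto simp: R_def)
    moreover
    define lam where "lam = \<mu>s(0 := 1 - (\<Sum>i\<in>{1..<m}. \<mu>s i))"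
    have split: "{..<m} = insert 0 {1..<m}" using m1 by auto
    have lam1: "(\<Sum>i\<in>{1..<m}. lam i * g i) = (\<Sum>i\<in>{1..<m}. \<mu>s i * g i)" for g
      by (intro sum.cong) (auto simp: lam_def)
    have "(\<Sum>i<m. lam i) = 1" using lam1[of "\<lambda>_. 1"] by (simp add: split lam_def)
    moreover have "R = (\<lambda>j. \<Sum>i<m. lam i * P i j)"
    proof
      fix j
      have e1: "(\<Sum>i\<in>{1..<m}. \<mu>s i * (P i j - P 0 j)) = (\<Sum>i\<in>{1..<m}. \<mu>s i * P i j) - (\<Sum>i\<in>{1..<m}. \<mu>s i) * P 0 j"
        by (simp add: right_diff_distrib sum_subtractf sum_distrib_right)
      have e2: "(\<Sum>i<m. lam i * P i j) = lam 0 * P 0 j + (\<Sum>i\<in>{1..<m}. \<mu>s i * P i j)"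
        using lam1[of "\<lambda>i. P i j"] by (simp add: split)
      show "R j = (\<Sum>i<m. lam i * P i j)"
        unfolding R_def sv_def e1 e2 by (simp add: lam_def algebra_simps)
    qed
    ultimately show ?thesis unfolding affL_def by blast
  qed
  thus ?thesis using orth by blast
qed

lemma expfam_pos: assumes "n \<ge> 1"
  shows "expfam n \<theta> \<in> prob_simplex n"
    and "\<And>j. j < n \<Longrightarrow> ln (expfam n \<theta> j) = ln (expfam n \<theta> 0) + (if j = 0 then 0 else \<theta> j)"
proof -
  define c where "c = 1 / (1 + (\<Sum>k\<in>{1..<n}. exp (\<theta> k)))"
  have sp: "0 < 1 + (\<Sum>k\<in>{1..<n}. exp (\<theta> k))" by (intro add_pos_nonneg sum_nonneg) auto
  hence cp: "c > 0" by (simp add: c_def)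
  have E: "expfam n \<theta> = (\<lambda>j. if j = 0 then c else if j < n then c * exp (\<theta> j) else 0)"
    unfolding expfam_def c_def Let_def ..
  have split: "{..<n} = insert 0 {1..<n}" using assms by auto
  have e0: "expfam n \<theta> 0 = c" by (simp add: E)
  have ej: "expfam n \<theta> j = c * exp (\<theta> j)" if "j \<in> {1..<n}" for j using that by (simp add: E)
  have "(\<Sum>j<n. expfam n \<theta> j) = expfam n \<theta> 0 + (\<Sum>j\<in>{1..<n}. expfam n \<theta> j)"
    unfolding split by (subst sum.insert) auto
  also have "(\<Sum>j\<in>{1..<n}. expfam n \<theta> j) = (\<Sum>j\<in>{1..<n}. c * exp (\<theta> j))"
    by (rule sum.cong[OF refl ej])
  finally have "(\<Sum>j<n. expfam n \<theta> j) = c + (\<Sum>j\<in>{1..<n}. c * exp (\<theta> j))" unfolding e0 .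
  also have "\<dots> = c * (1 + (\<Sum>k\<in>{1..<n}. exp (\<theta> k)))" by (simp add: sum_distrib_left algebra_simps)
  also have "\<dots> = 1" using sp by (simp add: c_def)
  finally show "expfam n \<theta> \<in> prob_simplex n" unfolding prob_simplex_def using cp assms by (auto simp: E)
  show "ln (expfam n \<theta> j) = ln (expfam n \<theta> 0) + (if j = 0 then 0 else \<theta> j)" if "j < n" for j
  proof (cases "j = 0")
    case False
    hence "j \<in> {1..<n}" using that by auto
    hence "ln (expfam n \<theta> j) = ln c + \<theta> j" using cp by (simp add: ej ln_mult)
    thus ?thesis using False e0 by simp
  qed simp
qed

lemma KL_expand: assumes "S \<in> prob_simplex n" "R \<in> prob_simplex n"
  shows "KL n S R = - entropy n S - (\<Sum>j<n. S j * ln (R j))"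
proof -
  have "KL n S R = (\<Sum>j<n. S j * ln (S j) - S j * ln (R j))" unfolding KL_def
    using assms by (intro sum.cong) (auto simp: prob_simplex_def ln_div algebra_simps)
  thus ?thesis by (simp add: entropy_def sum_subtractf)
qed

lemma affL_lin: assumes "S \<in> affL n m P" "\<forall>i\<in>{1..<m}. (\<Sum>j<n. (P i j - P 0 j) * x j) = 0"
  shows "(\<Sum>j<n. S j * x j) = (\<Sum>j<n. P 0 j * x j)"
proof -
  obtain lam where lam: "(\<Sum>i<m. lam i) = 1" "S = (\<lambda>j. \<Sum>i<m. lam i * P i j)"
    using assms(1) unfolding affL_def by blast
  have A: "(\<Sum>j<n. P i j * x j) = (\<Sum>j<n. P 0 j * x j)" if "i < m" for i
  proof (cases "i = 0")
    case False
    hence "i \<in> {1..<m}" using that by auto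
    hence "(\<Sum>j<n. P i j * x j - P 0 j * x j) = 0" using assms(2) by (simp add: algebra_simps)
    thus ?thesis by (simp add: sum_subtractf)
  qed simp
  have "(\<Sum>j<n. S j * x j) = (\<Sum>j<n. \<Sum>i<m. lam i * P i j * x j)"
    unfolding lam(2) by (simp add: sum_distrib_right)
  also have "\<dots> = (\<Sum>i<m. \<Sum>j<n. lam i * P i j * x j)" by (rule sum.swap)
  also have "\<dots> = (\<Sum>i<m. lam i * (\<Sum>j<n. P i j * x j))" by (simp add: sum_distrib_left mult.assoc)
  also have "\<dots> = (\<Sum>i<m. lam i * (\<Sum>j<n. P 0 j * x j))" by (rule sum.cong[OF refl]) (metis A lessThan_iff)
  also have "\<dots> = (\<Sum>j<n. P 0 j * x j)" using lam(1) by (simp add: sum_distrib_right[symmetric])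
  finally show ?thesis .
qed

lemma affL_simplex: "S \<in> affL n m P \<Longrightarrow> S \<in> prob_simplex n" unfolding affL_def by auto

lemma pythag:
  assumes "S \<in> affL n m P" "R \<in> affL n m P" "Q \<in> prob_simplex n"
    and orth: "\<forall>i\<in>{1..<m}. (\<Sum>j<n. (P i j - P 0 j) * ln (R j / Q j)) = 0"
  shows "KL n S Q = KL n S R + KL n R Q"
proof -
  have S: "S \<in> prob_simplex n" and R: "R \<in> prob_simplex n" using assms affL_simplex by auto
  have "KL n S Q - KL n S R = (\<Sum>j<n. S j * ln (R j / Q j))" unfolding KL_def sum_subtractf[symmetric]
    using S R assms(3) by (intro sum.cong) (auto simp: prob_simplex_def ln_div algebra_simps)
  also have "\<dots> = (\<Sum>j<n. P 0 j * ln (R j / Q j))" by (rule affL_lin[OF assms(1) orth])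
  also have "\<dots> = (\<Sum>j<n. R j * ln (R j / Q j))" by (rule affL_lin[OF assms(2) orth, symmetric])
  also have "\<dots> = KL n R Q" unfolding KL_def ..
  finally show ?thesis by simp
qed

theorem lemma19:
  fixes n m :: nat and P :: "nat \<Rightarrow> nat \<Rightarrow> real" and \<theta> :: "nat \<Rightarrow> real"
  assumes "m \<ge> 1"
    and "\<forall>i<m. P i \<in> prob_simplex n"
    and "general_position n m P"
    and "\<forall>i\<in>{1..<m}. (\<Sum>j\<in>{1..<n}. (P i j - P 0 j) * \<theta> j) = entropy n (P 0) - entropy n (P i)"
  shows "iproj n (expfam n \<theta>) (affL n m P) \<in> affL n m P
     \<and> (\<forall>i\<in>{1..<m}. KL n (P i) (iproj n (expfam n \<theta>) (affL n m P))
                      = KL n (P 0) (iproj n (expfam n \<theta>) (affL n m P)))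
     \<and> (\<forall>R\<in>affL n m P. (\<forall>i\<in>{1..<m}. KL n (P i) R = KL n (P 0) R)
                      \<longrightarrow> R = iproj n (expfam n \<theta>) (affL n m P))"
proof -
  define Q where "Q = expfam n \<theta>"
  define L where "L = affL n m P"
  have P0: "P 0 \<in> prob_simplex n" using assms(1,2) by auto
  have n1: "n \<ge> 1"
  proof (rule ccontr)
    assume "\<not> n \<ge> 1" hence "n = 0" by simp
    thus False using P0 by (simp add: prob_simplex_def)
  qed
  have Qs: "Q \<in> prob_simplex n" unfolding Q_def by (rule expfam_pos(1)[OF n1])
  have lnQ: "ln (Q j) = ln (Q 0) + (if j = 0 then 0 else \<theta> j)" if "j < n" for j
    unfolding Q_def by (rule expfam_pos(2)[OF n1 that])
  have Ps: "P i \<in> prob_simplex n" if "i < m" for i using assms(2) that by auto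
  have eqv: "KL n (P i) R = KL n (P 0) R \<longleftrightarrow> (\<Sum>j<n. (P i j - P 0 j) * ln (R j / Q j)) = 0"
    if R: "R \<in> prob_simplex n" and i: "i \<in> {1..<m}" for R i
  proof -
    have Pi: "P i \<in> prob_simplex n" using i Ps by auto
    have sw: "(\<Sum>j<n. P i j - P 0 j) = 0" using Pi P0 by (simp add: sum_subtractf prob_simplex_def)
    have split: "{..<n} = insert 0 {1..<n}" using n1 by auto
    have "(\<Sum>j<n. (P i j - P 0 j) * ln (Q j)) = (\<Sum>j<n. (P i j - P 0 j) * ln (Q 0) + (P i j - P 0 j) * (if j = 0 then 0 else \<theta> j))"
    proof (intro sum.cong refl)
      fix j assume j: "j \<in> {..<n}"
      show "(P i j - P 0 j) * ln (Q j) = (P i j - P 0 j) * ln (Q 0) + (P i j - P 0 j) * (if j = 0 then 0 else \<theta> j)"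
      proof (cases "j = 0")
        case False
        have "ln (Q j) = ln (Q 0) + \<theta> j" using lnQ[of j] j False by simp
        thus ?thesis using False by (simp add: algebra_simps)
      qed simp
    qed
    also have "\<dots> = (\<Sum>j\<in>{1..<n}. (P i j - P 0 j) * \<theta> j)"
    proof -
      have a1: "(\<Sum>j<n. (P i j - P 0 j) * ln (Q 0)) = 0" using sw by (simp add: sum_distrib_right[symmetric])
      have "(\<Sum>j\<in>{1..<n}. (P i j - P 0 j) * (if j = 0 then 0 else \<theta> j)) = (\<Sum>j\<in>{1..<n}. (P i j - P 0 j) * \<theta> j)"
        by (intro sum.cong) auto
      hence a2: "(\<Sum>j<n. (P i j - P 0 j) * (if j = 0 then 0 else \<theta> j)) = (\<Sum>j\<in>{1..<n}. (P i j - P 0 j) * \<theta> j)"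
        unfolding split by simp
      show ?thesis unfolding sum.distrib a1 a2 by simp
    qed
    also have "\<dots> = entropy n (P 0) - entropy n (P i)" using assms(4) i by blast
    finally have lq: "(\<Sum>j<n. (P i j - P 0 j) * ln (Q j)) = entropy n (P 0) - entropy n (P i)" .
    have "(\<Sum>j<n. (P i j - P 0 j) * ln (R j / Q j)) = (\<Sum>j<n. (P i j - P 0 j) * ln (R j)) - (\<Sum>j<n. (P i j - P 0 j) * ln (Q j))"
      unfolding sum_subtractf[symmetric] using R Qs by (intro sum.cong) (auto simp: prob_simplex_def ln_div algebra_simps)
    moreover have "KL n (P i) R - KL n (P 0) R = entropy n (P 0) - entropy n (P i) - (\<Sum>j<n. (P i j - P 0 j) * ln (R j))"
      unfolding KL_expand[OF Pi R] KL_expand[OF P0 R] by (simp add: sum_subtractf algebra_simps)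
    ultimately show ?thesis using lq by linarith
  qed
  obtain R0 where R0: "R0 \<in> L" "\<forall>i\<in>{1..<m}. (\<Sum>j<n. (P i j - P 0 j) * ln (R0 j / Q j)) = 0"
    using exists_orth[OF assms(1,2,3) Qs] unfolding L_def by blast
  have LS: "S \<in> prob_simplex n" if "S \<in> L" for S using that affL_simplex unfolding L_def by blast
  have minR: "KL n R Q \<le> KL n S Q" if RL: "R \<in> L" and orR: "\<forall>i\<in>{1..<m}. (\<Sum>j<n. (P i j - P 0 j) * ln (R j / Q j)) = 0" and SL: "S \<in> L" for R S
  proof -
    have "KL n S Q = KL n S R + KL n R Q" using pythag[of S n m P R Q, OF _ _ Qs orR] RL SL unfolding L_def by simp
    moreover have "0 \<le> KL n S R" by (rule gibbs_ge[OF LS[OF SL] LS[OF RL]])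
    ultimately show ?thesis by simp
  qed
  have uniq: "M = R0" if MinL: "M \<in> L" and Mmin: "\<forall>S\<in>L. KL n M Q \<le> KL n S Q" for M
  proof -
    have "KL n M Q = KL n M R0 + KL n R0 Q" using pythag[of M n m P R0 Q, OF _ _ Qs R0(2)] MinL R0(1) unfolding L_def by simp
    moreover have "KL n M Q \<le> KL n R0 Q" using Mmin R0(1) by blast
    ultimately have "KL n M R0 \<le> 0" by simp
    thus ?thesis by (rule gibbs_eq[OF LS[OF MinL] LS[OF R0(1)]])
  qed
  have ip: "iproj n Q L = R0" unfolding iproj_def
  proof (rule the_equality)
    show "R0 \<in> L \<and> (\<forall>R\<in>L. KL n R0 Q \<le> KL n R Q)" using R0(1) minR[OF R0(1) R0(2)] by blast
  next
    fix M assume "M \<in> L \<and> (\<forall>R\<in>L. KL n M Q \<le> KL n R Q)"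
    thus "M = R0" using uniq by blast
  qed
  have R0s: "R0 \<in> prob_simplex n" by (rule LS[OF R0(1)])
  show ?thesis unfolding Q_def[symmetric] L_def[symmetric] ip
  proof (intro conjI ballI impI)
    show "R0 \<in> L" by (rule R0(1))
  next
    fix i assume i: "i \<in> {1..<m}"
    have "(\<Sum>j<n. (P i j - P 0 j) * ln (R0 j / Q j)) = 0" using R0(2) i by blast
    thus "KL n (P i) R0 = KL n (P 0) R0" using eqv[OF R0s i] by simp
  next
    fix R assume RL: "R \<in> L" and eq: "\<forall>i\<in>{1..<m}. KL n (P i) R = KL n (P 0) R"
    have Rs: "R \<in> prob_simplex n" by (rule LS[OF RL])
    have orR: "\<forall>i\<in>{1..<m}. (\<Sum>j<n. (P i j - P 0 j) * ln (R j / Q j)) = 0"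
    proof
      fix i assume i: "i \<in> {1..<m}"
      show "(\<Sum>j<n. (P i j - P 0 j) * ln (R j / Q j)) = 0" using eqv[OF Rs i] eq i by blast
    qed
    have "\<forall>S\<in>L. KL n R Q \<le> KL n S Q" using minR[OF RL orR] by blast
    thus "R = R0" by (rule uniq[OF RL])
  qed
qed

end
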